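(* Let $\{\mathcal{K}^s:s\geq0\}$ be a strongly continuous one-parameter semigroup of isometries on a complex Hilbert space $\mathcal{H}$, let $\mathcal{H}_U=\bigcap_{s\geq0}\mathcal{K}^s\mathcal{H}$ and let $\mathcal{H}_{NU}=\mathcal{H}_U^{\perp}$. Then for every $h\in\mathcal{H}_{NU}$, $$\lim_{\tau\to\infty}\lambda_{h,\tau,1}=0.$$
   Context: A strongly continuous one-parameter semigroup of isometries means: each $\mathcal{K}^s$ is a linear isometry, $\mathcal{K}^0=I$, $\mathcal{K}^{s_1}\mathcal{K}^{s_2}=\mathcal{K}^{s_1+s_2}$, and $s\mapsto\mathcal{K}^sh$ is norm-continuous for each $h$. Inner products are linear in the first argument. For $h\in\mathcal{H}$ and $\tau>0$, $A_{h,\tau}$ is the operator on $L^2([0,\tau])$ defined by $(A_{h,\tau}g)(t)=\frac1\tau\int_0^\tau g(s)\langle\mathcal{K}^sh,\mathcal{K}^th\rangle\,ds$; it is a positive semidefinite self-adjoint compact operator, and $\lambda_{h,\tau,1}=\sup_{g\neq0}\langle A_{h,\tau}g,g\rangle/\|g\|^2$ is its largest eigenvalue. *)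

theory Defs
  imports "HOL-Analysis.Analysis"
begin

class complex_vector = real_vector +
  fixes scaleC :: "complex \<Rightarrow> 'a \<Rightarrow> 'a" (infixr "*\<^sub>C" 75)
  assumes scaleC_add_right: "scaleC a (x + y) = scaleC a x + scaleC a y"
    and scaleC_add_left: "scaleC (a + b) x = scaleC a x + scaleC b x"
    and scaleC_scaleC: "scaleC a (scaleC b x) = scaleC (a * b) x"
    and scaleC_one: "scaleC 1 x = x"
    and scaleR_scaleC: "scaleR r x = scaleC (complex_of_real r) x"

class complex_inner = complex_vector + real_normed_vector +
  fixes cinner :: "'a \<Rightarrow> 'a \<Rightarrow> complex"
  assumes cinner_commute: "cinner x y = cnj (cinner y x)"
    and cinner_add_left: "cinner (x + y) z = cinner x z + cinner y z"
    and cinner_scaleC_left: "cinner (scaleC r x) y = r * cinner x y"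
    and cinner_self_norm: "cinner x x = complex_of_real ((norm x)\<^sup>2)"

class chilbert_space = complex_inner + complete_space

definition strongly_cont_isometry_semigroup :: "(real \<Rightarrow> 'a::chilbert_space \<Rightarrow> 'a) \<Rightarrow> bool" where
  "strongly_cont_isometry_semigroup K \<longleftrightarrow>
     (\<forall>s\<ge>0. (\<forall>x y. K s (x + y) = K s x + K s y)
            \<and> (\<forall>c x. K s (c *\<^sub>C x) = c *\<^sub>C K s x)
            \<and> (\<forall>x. norm (K s x) = norm x))
   \<and> K 0 = id
   \<and> (\<forall>s1\<ge>0. \<forall>s2\<ge>0. K s1 \<circ> K s2 = K (s1 + s2))
   \<and> (\<forall>h. continuous_on {0..} (\<lambda>s. K s h))"

definition unitary_part :: "(real \<Rightarrow> 'a::chilbert_space \<Rightarrow> 'a) \<Rightarrow> 'a set" where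
  "unitary_part K = (\<Inter>s\<in>{0..}. range (K s))"

definition nonunitary_part :: "(real \<Rightarrow> 'a::chilbert_space \<Rightarrow> 'a) \<Rightarrow> 'a set" where
  "nonunitary_part K = {h. \<forall>u\<in>unitary_part K. cinner h u = 0}"

definition L2_on :: "real \<Rightarrow> (real \<Rightarrow> complex) set" where
  "L2_on \<tau> = {g. g \<in> borel_measurable (lebesgue_on {0..\<tau>})
                 \<and> integrable (lebesgue_on {0..\<tau>}) (\<lambda>t. (cmod (g t))\<^sup>2)}"

definition L2_norm_sq :: "real \<Rightarrow> (real \<Rightarrow> complex) \<Rightarrow> real" where
  "L2_norm_sq \<tau> g = integral\<^sup>L (lebesgue_on {0..\<tau>}) (\<lambda>t. (cmod (g t))\<^sup>2)"

definition A_op :: "(real \<Rightarrow> 'a::chilbert_space \<Rightarrow> 'a) \<Rightarrow> 'a \<Rightarrow> real \<Rightarrow> (real \<Rightarrow> complex) \<Rightarrow> real \<Rightarrow> complex" where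
  "A_op K h \<tau> g t = complex_of_real (1 / \<tau>) *
     integral\<^sup>L (lebesgue_on {0..\<tau>}) (\<lambda>s. g s * cinner (K s h) (K t h))"

definition A_form :: "(real \<Rightarrow> 'a::chilbert_space \<Rightarrow> 'a) \<Rightarrow> 'a \<Rightarrow> real \<Rightarrow> (real \<Rightarrow> complex) \<Rightarrow> complex" where
  "A_form K h \<tau> g = integral\<^sup>L (lebesgue_on {0..\<tau>}) (\<lambda>t. A_op K h \<tau> g t * cnj (g t))"

text \<open>\<open>\<lambda>_{h,\<tau>,1} = sup_{g \<noteq> 0} \<langle>A g, g\<rangle> / \<parallel>g\<parallel>^2\<close>; the quadratic form is real
  since \<open>A\<close> is self-adjoint, so we take its real part.\<close>
definition lambda1 :: "(real \<Rightarrow> 'a::chilbert_space \<Rightarrow> 'a) \<Rightarrow> 'a \<Rightarrow> real \<Rightarrow> real" where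
  "lambda1 K h \<tau> = Sup {Re (A_form K h \<tau> g) / L2_norm_sq \<tau> g | g. g \<in> L2_on \<tau> \<and> L2_norm_sq \<tau> g \<noteq> 0}"

end

theory Submission
  imports Defs
begin


lemma cinner_zero_left[simp]: "cinner 0 (y::'a::complex_inner) = 0"
  using cinner_add_left[of "0::'a" 0 y] by simp

lemma cinner_add_right: "cinner (x::'a::complex_inner) (y + z) = cinner x y + cinner x z"
  by (metis cinner_add_left cinner_commute complex_cnj_add)

lemma cinner_zero_right[simp]: "cinner (x::'a::complex_inner) 0 = 0"
  using cinner_add_right[of x "0::'a" 0] by simp

lemma cinner_scaleC_right: "cinner (x::'a::complex_inner) (c *\<^sub>C y) = cnj c * cinner x y"
  by (metis cinner_commute cinner_scaleC_left complex_cnj_mult)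

lemma cinner_diff_left: "cinner ((x::'a::complex_inner) - y) z = cinner x z - cinner y z"
  by (metis add_diff_cancel_left' cinner_add_left diff_add_cancel eq_diff_eq)

lemma cinner_diff_right: "cinner (x::'a::complex_inner) (y - z) = cinner x y - cinner x z"
  by (metis add_diff_cancel_left' cinner_add_right diff_add_cancel eq_diff_eq)

lemma cinner_minus_left: "cinner (- (x::'a::complex_inner)) z = - cinner x z"
  using cinner_diff_left[of 0 x z] by simp

lemma cinner_minus_right: "cinner (x::'a::complex_inner) (- z) = - cinner x z"
  using cinner_diff_right[of x 0 z] by simp

lemma cinner_scaleR_left: "cinner (r *\<^sub>R (x::'a::complex_inner)) y = of_real r * cinner x y"
  by (simp add: scaleR_scaleC cinner_scaleC_left)

lemma cinner_scaleR_right: "cinner (x::'a::complex_inner) (r *\<^sub>R y) = of_real r * cinner x y"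
  by (simp add: scaleR_scaleC cinner_scaleC_right)

lemma Re_cinner_self: "Re (cinner (x::'a::complex_inner) x) = (norm x)^2"
  by (simp add: cinner_self_norm)

lemma norm_add_sq: "(norm ((x::'a::complex_inner) + y))^2 = (norm x)^2 + (norm y)^2 + 2 * Re (cinner x y)"
proof -
  have "cinner (x+y) (x+y) = cinner x x + cinner y y + (cinner x y + cnj (cinner x y))"
    by (simp add: cinner_add_left cinner_add_right algebra_simps flip: cinner_commute)
  then have "Re (cinner (x+y) (x+y)) = Re (cinner x x) + Re (cinner y y) + 2 * Re (cinner x y)"
    by simp
  then show ?thesis by (simp add: Re_cinner_self)
qed

lemma scaleC_zero_left[simp]: "(0::complex) *\<^sub>C (x::'a::complex_vector) = 0"
  by (metis of_real_0 scaleR_scaleC scaleR_zero_left)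

lemma scaleC_minus_left: "(- c) *\<^sub>C (x::'a::complex_vector) = - (c *\<^sub>C x)"
  by (metis add.right_inverse add_eq_0_iff scaleC_add_left scaleC_zero_left)

lemma norm_scaleC: "norm (c *\<^sub>C (x::'a::complex_inner)) = cmod c * norm x"
proof -
  have "cinner (c *\<^sub>C x) (c *\<^sub>C x) = (c * cnj c) * cinner x x"
    by (simp add: cinner_scaleC_left cinner_scaleC_right mult.assoc)
  also have "c * cnj c = of_real ((cmod c)^2)" by (rule complex_norm_square[symmetric])
  finally have "(norm (c *\<^sub>C x))^2 = (cmod c)^2 * (norm x)^2"
    by (simp add: cinner_self_norm flip: of_real_mult of_real_power)
  then show ?thesis
    by (simp add: power_mult_distrib[symmetric] power2_eq_iff_nonneg)
qed

lemma Re_cinner_le: "Re (cinner (x::'a::complex_inner) y) \<le> norm x * norm y"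
proof -
  have "(norm (x+y))^2 \<le> (norm x + norm y)^2"
    by (simp add: norm_triangle_ineq power_mono)
  then show ?thesis using norm_add_sq[of x y] by (simp add: power2_sum)
qed

lemma cinner_CS: "cmod (cinner (x::'a::complex_inner) y) \<le> norm x * norm y"
proof (cases "cinner x y = 0")
  case False
  define z where "z = cinner x y"
  define c where "c = cnj z / of_real (cmod z)"
  have cz: "cmod c = 1" using False by (simp add: c_def z_def norm_divide)
  have "Re (cinner (c *\<^sub>C x) y) = Re (c * z)" by (simp add: cinner_scaleC_left z_def)
  also have "c * z = of_real (cmod z)"
  proof -
    have "c * z = (z * cnj z) / of_real (cmod z)" by (simp add: c_def)
    also have "z * cnj z = of_real ((cmod z)^2)" by (rule complex_norm_square[symmetric])
    finally show ?thesis using False by (simp add: z_def power2_eq_square)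
  qed
  finally have "cmod z \<le> norm (c *\<^sub>C x) * norm y" using Re_cinner_le[of "c *\<^sub>C x" y] by simp
  then show ?thesis by (simp add: norm_scaleC cz z_def)
qed simp

lemma bounded_bilinear_cinner: "bounded_bilinear (cinner :: 'a::complex_inner \<Rightarrow> 'a \<Rightarrow> complex)"
proof
  fix a b :: 'a and r :: real and x y :: 'a
  show "cinner (a + b) x = cinner a x + cinner b x" by (rule cinner_add_left)
  show "cinner a (x + y) = cinner a x + cinner a y" by (rule cinner_add_right)
  show "cinner (r *\<^sub>R a) x = r *\<^sub>R cinner a x" by (simp add: cinner_scaleR_left scaleR_conv_of_real)
  show "cinner a (r *\<^sub>R x) = r *\<^sub>R cinner a x" by (simp add: cinner_scaleR_right scaleR_conv_of_real)
next
  show "\<exists>K. \<forall>a b::'a. norm (cinner a b) \<le> norm a * norm b * K"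
    by (rule exI[of _ 1]) (simp add: cinner_CS)
qed

lemma cinner_eq_zero_self: "cinner (x::'a::complex_inner) x = 0 \<Longrightarrow> x = 0"
  by (simp add: cinner_self_norm)



context
  fixes K :: "real \<Rightarrow> 'a::chilbert_space \<Rightarrow> 'a"
  assumes SG: "strongly_cont_isometry_semigroup K"
begin

lemma sg_add: "s \<ge> 0 \<Longrightarrow> K s (x + y) = K s x + K s y"
  using SG unfolding strongly_cont_isometry_semigroup_def by blast
lemma sg_scaleC: "s \<ge> 0 \<Longrightarrow> K s (c *\<^sub>C x) = c *\<^sub>C K s x"
  using SG unfolding strongly_cont_isometry_semigroup_def by blast
lemma sg_norm: "s \<ge> 0 \<Longrightarrow> norm (K s x) = norm x"
  using SG unfolding strongly_cont_isometry_semigroup_def by blast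
lemma sg_comp: "s1 \<ge> 0 \<Longrightarrow> s2 \<ge> 0 \<Longrightarrow> K s1 (K s2 x) = K (s1 + s2) x"
  using SG unfolding strongly_cont_isometry_semigroup_def by (metis comp_apply)
lemma sg_cont: "continuous_on {0..} (\<lambda>s. K s h)"
  using SG unfolding strongly_cont_isometry_semigroup_def by blast

lemma sg_diff: "s \<ge> 0 \<Longrightarrow> K s (x - y) = K s x - K s y"
  using sg_add[of s "x - y" y] by simp

lemma sg_zero: "s \<ge> 0 \<Longrightarrow> K s 0 = 0"
  using sg_diff[of s 0 0] by simp

lemma sg_scaleR: "s \<ge> 0 \<Longrightarrow> K s (r *\<^sub>R x) = r *\<^sub>R K s x"
  by (simp add: scaleR_scaleC sg_scaleC)

lemma sg_cinner: assumes "s \<ge> 0" shows "cinner (K s x) (K s y) = cinner x y"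
proof -
  have re: "Re (cinner (K s u) (K s v)) = Re (cinner u v)" for u v
  proof -
    have "norm (K s u + K s v) = norm (u + v)"
      using sg_add[OF assms, of u v] sg_norm[OF assms, of "u+v"] by simp
    then show ?thesis
      using norm_add_sq[of "K s u" "K s v"] norm_add_sq[of u v] sg_norm[OF assms] by simp
  qed
  have "Re (cinner (K s x) (K s (\<i> *\<^sub>C y))) = Re (cinner x (\<i> *\<^sub>C y))" by (rule re)
  then have "Im (cinner (K s x) (K s y)) = Im (cinner x y)"
    by (simp add: sg_scaleC[OF assms] cinner_scaleC_right)
  with re[of x y] show ?thesis by (simp add: complex_eqI)
qed

lemma sg_bounded_linear: "s \<ge> 0 \<Longrightarrow> bounded_linear (K s)"
  by (rule bounded_linear_intro[where K=1]) (auto simp: sg_add sg_scaleR sg_norm)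

lemma sg_range_closed: assumes "s \<ge> 0" shows "closed (range (K s))"
proof -
  have "complete (K s ` UNIV)"
    by (rule complete_isometric_image[where e=1])
       (auto simp: sg_bounded_linear assms sg_norm complete_UNIV)
  then show ?thesis by (rule complete_imp_closed)
qed

lemma sg_range_mono: "0 \<le> r1 \<Longrightarrow> r1 \<le> r2 \<Longrightarrow> range (K r2) \<subseteq> range (K r1)"
proof
  fix x assume "0 \<le> r1" "r1 \<le> r2" "x \<in> range (K r2)"
  then obtain u where "x = K r2 u" by auto
  then have "x = K r1 (K (r2 - r1) u)" using sg_comp[of r1 "r2 - r1" u] \<open>0 \<le> r1\<close> \<open>r1 \<le> r2\<close> by simp
  then show "x \<in> range (K r1)" by auto
qed

end



lemma parallelogram: "(norm ((a::'a::complex_inner) - b))^2 + (norm (a + b))^2 = 2*(norm a)^2 + 2*(norm b)^2"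
proof -
  have "(norm (a + (-b)))^2 = (norm a)^2 + (norm b)^2 - 2*Re(cinner a b)"
    using norm_add_sq[of a "-b"] by (simp add: cinner_minus_right)
  then have "(norm (a - b))^2 = (norm a)^2 + (norm b)^2 - 2*Re(cinner a b)" by simp
  then show ?thesis using norm_add_sq[of a b] by simp
qed

lemma proj_exists:
  fixes M :: "'a::chilbert_space set" and h :: 'a
  assumes cl: "closed M" and z: "0 \<in> M"
    and ad: "\<And>x y. x \<in> M \<Longrightarrow> y \<in> M \<Longrightarrow> x + y \<in> M"
    and sc: "\<And>c x. x \<in> M \<Longrightarrow> c *\<^sub>C x \<in> M"
  shows "\<exists>p\<in>M. \<forall>m\<in>M. cinner (h - p) m = 0"
proof -
  define D where "D = (\<lambda>m. (norm (h - m))^2) ` M"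
  define d where "d = Inf D"
  have Dne: "D \<noteq> {}" using z by (auto simp: D_def)
  have bdd: "bdd_below D" unfolding D_def by (rule bdd_belowI[of _ 0]) auto
  have low: "d \<le> (norm (h-m))^2" if "m \<in> M" for m
    unfolding d_def by (rule cInf_lower) (use that bdd in \<open>auto simp: D_def\<close>)
  have "\<forall>n::nat. \<exists>m\<in>M. (norm (h-m))^2 < d + inverse (real (Suc n))"
  proof
    fix n :: nat
    have "Inf D < d + inverse (real (Suc n))" by (simp add: d_def)
    then obtain x where "x \<in> D" "x < d + inverse (real (Suc n))" using cInf_lessD[OF Dne] by blast
    then show "\<exists>m\<in>M. (norm (h-m))^2 < d + inverse (real (Suc n))" by (auto simp: D_def)
  qed
  then obtain f where f: "\<And>n. f n \<in> M" "\<And>n. (norm (h - f n))^2 < d + inverse (real (Suc n))"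
    by metis
  have para: "(norm (f i - f j))^2 \<le> 2 * inverse (real (Suc i)) + 2 * inverse (real (Suc j))" for i j
  proof -
    let ?a = "h - f i" and ?b = "h - f j"
    have pl: "(norm (?a - ?b))^2 + (norm (?a + ?b))^2 = 2*(norm ?a)^2 + 2*(norm ?b)^2"
      by (rule parallelogram)
    have mid: "(1/2::real) *\<^sub>R (f i + f j) \<in> M" using sc ad f by (simp add: scaleR_scaleC)
    have "?a + ?b = 2 *\<^sub>R (h - (1/2::real) *\<^sub>R (f i + f j))" by (simp add: algebra_simps scaleR_2)
    then have "(norm (?a + ?b))^2 = 4 * (norm (h - (1/2::real) *\<^sub>R (f i + f j)))^2"
      by (simp add: power_mult_distrib)
    then have "(norm (?a + ?b))^2 \<ge> 4 * d" using low[OF mid] by simp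
    moreover have "?a - ?b = f j - f i" by simp
    ultimately show ?thesis using pl f(2)[of i] f(2)[of j] by (simp add: norm_minus_commute)
  qed
  have "Cauchy f"
  proof (rule metric_CauchyI)
    fix e :: real assume e: "0 < e"
    obtain N :: nat where N: "4 / e^2 < real N" using reals_Archimedean2 by blast
    have "dist (f i) (f j) < e" if "i \<ge> N" "j \<ge> N" for i j
    proof -
      have "inverse (real (Suc i)) \<le> inverse (real (Suc N))" "inverse (real (Suc j)) \<le> inverse (real (Suc N))"
        using that by (auto simp: field_simps)
      moreover have "4 * inverse (real (Suc N)) < e^2"
        using N e by (simp add: field_simps) (smt (verit) zero_less_power)
      ultimately have "(norm (f i - f j))^2 < e^2" using para[of i j] by linarith
      then show ?thesis using e by (simp add: dist_norm power_less_imp_less_base)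
    qed
    then show "\<exists>M. \<forall>m\<ge>M. \<forall>n\<ge>M. dist (f m) (f n) < e" by blast
  qed
  then obtain p where lim: "f \<longlonglongrightarrow> p" using Cauchy_convergent_iff convergent_def by blast
  have pM: "p \<in> M" using closed_sequentially[OF cl _ lim] f(1) by blast
  have "(norm (h - p))^2 \<le> d"
  proof (rule LIMSEQ_le)
    show "(\<lambda>n. (norm (h - f n))^2) \<longlonglongrightarrow> (norm (h - p))^2"
      by (intro tendsto_intros lim)
    show "(\<lambda>n. d + inverse (real (Suc n))) \<longlonglongrightarrow> d"
      using tendsto_add[OF tendsto_const LIMSEQ_inverse_real_of_nat, of d] by simp
    show "\<exists>N. \<forall>n\<ge>N. (norm (h - f n))^2 \<le> d + inverse (real (Suc n))"
      using f(2) less_imp_le by blast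
  qed
  then have best: "(norm (h - p))^2 \<le> (norm (h - m'))^2" if "m' \<in> M" for m'
    using low[OF that] by linarith
  have "cinner (h - p) m = 0" if m: "m \<in> M" for m
  proof -
    define x where "x = h - p"
    define zz where "zz = cinner x m"
    define t where "t = 1 / ((norm m)^2 + 1)"
    define c where "c = of_real t * zz"
    have pos: "0 < (norm m)^2 + 1" by (simp add: add_nonneg_pos)
    have t: "t > 0" "t * (norm m)^2 \<le> 1" using pos by (auto simp: t_def divide_simps)
    have "p + c *\<^sub>C m \<in> M" using ad sc pM m by blast
    from best[OF this] have "(norm x)^2 \<le> (norm (x + (-c) *\<^sub>C m))^2"
      by (simp add: x_def scaleC_minus_left algebra_simps)
    also have "\<dots> = (norm x)^2 + (cmod c)^2 * (norm m)^2 + 2 * Re (cinner x ((-c) *\<^sub>C m))"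
      by (simp add: norm_add_sq norm_scaleC power_mult_distrib)
    also have "cinner x ((-c) *\<^sub>C m) = - (of_real t * (cnj zz * zz))"
      by (simp add: cinner_scaleC_right c_def zz_def)
    also have "cnj zz * zz = of_real ((cmod zz)^2)"
      using complex_norm_square[of zz] by (simp add: mult.commute)
    finally have ineq: "2 * t * (cmod zz)^2 \<le> (t * cmod zz)^2 * (norm m)^2"
      using t by (simp add: c_def norm_mult flip: of_real_mult)
    have "(t * cmod zz)^2 * (norm m)^2 = (t * (cmod zz)^2) * (t * (norm m)^2)"
      by (simp add: power2_eq_square)
    also have "\<dots> \<le> t * (cmod zz)^2"
      using t by (intro mult_left_le) auto
    finally have "t * (cmod zz)^2 \<le> 0" using ineq by linarith
    then have "(cmod zz)^2 \<le> 0" using t by (simp add: mult_le_0_iff)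
    then show ?thesis by (simp add: zz_def x_def)
  qed
  then show ?thesis using pM by blast
qed



lemma phi_tendsto_zero:
  fixes K :: "real \<Rightarrow> 'a::chilbert_space \<Rightarrow> 'a"
  assumes SG: "strongly_cont_isometry_semigroup K" and hN: "h \<in> nonunitary_part K"
  shows "((\<lambda>r. cinner (K r h) h) \<longlongrightarrow> 0) at_top"
proof -
  have "\<exists>p\<in>range (K s). \<forall>m\<in>range (K s). cinner (h - p) m = 0" if s: "s \<ge> 0" for s
  proof (rule proj_exists)
    show "closed (range (K s))" by (rule sg_range_closed[OF SG s])
    show "0 \<in> range (K s)" using sg_zero[OF SG s] by (metis rangeI)
    show "x + y \<in> range (K s)" if "x \<in> range (K s)" "y \<in> range (K s)" for x y
    proof -
      from that obtain u v where "x = K s u" "y = K s v" by auto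
      then show ?thesis using sg_add[OF SG s, of u v] by (metis rangeI)
    qed
    show "c *\<^sub>C x \<in> range (K s)" if "x \<in> range (K s)" for c x
    proof -
      from that obtain u where "x = K s u" by auto
      then show ?thesis using sg_scaleC[OF SG s, of c u] by (metis rangeI)
    qed
  qed
  then have "\<forall>n::nat. \<exists>p\<in>range (K (real n)). \<forall>m\<in>range (K (real n)). cinner (h - p) m = 0"
    by simp
  then obtain P where PM: "\<And>n. P n \<in> range (K (real n))"
    and Porth: "\<And>n m. m \<in> range (K (real n)) \<Longrightarrow> cinner (h - P n) m = 0" by metis
  have mono: "range (K (real m)) \<subseteq> range (K (real n))" if "n \<le> m" for n m
    using sg_range_mono[OF SG, of "real n" "real m"] that by simp
  have pyth: "(norm (P n))^2 = (norm (P m))^2 + (norm (P n - P m))^2" if "n \<le> m" for n m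
  proof -
    have "cinner (P n - P m) (P m) = cinner (h - P m) (P m) - cinner (h - P n) (P m)"
      by (simp add: cinner_diff_left)
    also have "\<dots> = 0" using Porth[OF PM[of m]] Porth[of "P m" n] PM[of m] mono[OF that] by auto
    finally have "cinner (P n - P m) (P m) = 0" .
    then show ?thesis using norm_add_sq[of "P n - P m" "P m"] by simp
  qed
  define a where "a n = (norm (P n))^2" for n
  have "decseq a" unfolding decseq_def a_def using pyth by fastforce
  then obtain L where "a \<longlonglongrightarrow> L" using decseq_convergent[of a 0] by (auto simp: a_def)
  then have Ca: "Cauchy a" by (rule LIMSEQ_imp_Cauchy)
  have "Cauchy P"
  proof (rule metric_CauchyI)
    fix e :: real assume e: "0 < e"
    obtain N where N: "\<forall>m\<ge>N. \<forall>n\<ge>N. dist (a m) (a n) < e^2"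
      using metric_CauchyD[OF Ca, of "e^2"] e by auto
    have "dist (P i) (P j) < e" if "i \<ge> N" "j \<ge> N" for i j
    proof -
      have aij: "\<bar>a i - a j\<bar> < e^2" using N that by (auto simp: dist_real_def)
      have "(norm (P i - P j))^2 < e^2"
      proof (cases "i \<le> j")
        case True then show ?thesis using pyth[OF True] aij by (auto simp: a_def)
      next
        case False then have "j \<le> i" by simp
        then show ?thesis using pyth[OF \<open>j \<le> i\<close>] aij
          by (auto simp: a_def norm_minus_commute)
      qed
      then show ?thesis using e by (simp add: dist_norm power_less_imp_less_base)
    qed
    then show "\<exists>M. \<forall>m\<ge>M. \<forall>n\<ge>M. dist (P m) (P n) < e" by blast
  qed
  then obtain y where Py: "P \<longlonglongrightarrow> y" using Cauchy_convergent_iff convergent_def by blast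
  have yk: "y \<in> range (K (real k))" for k
  proof (rule closed_sequentially[OF sg_range_closed[OF SG] _ LIMSEQ_ignore_initial_segment[OF Py, of k]])
    show "P (n + k) \<in> range (K (real k))" for n using PM[of "n+k"] mono[of k "n+k"] by auto
  qed simp
  have yU: "y \<in> unitary_part K"
    unfolding unitary_part_def
  proof
    fix s :: real assume "s \<in> {0..}"
    then have "range (K (real (nat \<lceil>s\<rceil>))) \<subseteq> range (K s)"
      by (intro sg_range_mono[OF SG]) (auto simp: real_nat_ceiling_ge)
    then show "y \<in> range (K s)" using yk by blast
  qed
  have hy: "cinner h y = 0" using hN yU unfolding nonunitary_part_def by blast
  have "(\<lambda>n. cinner (h - P n) y) \<longlonglongrightarrow> cinner (h - y) y"
    by (intro bounded_bilinear.tendsto[OF bounded_bilinear_cinner] tendsto_diff tendsto_const Py)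
  moreover have "\<And>n. cinner (h - P n) y = 0" using Porth yk by blast
  ultimately have "(\<lambda>n. 0) \<longlonglongrightarrow> cinner (h - y) y" by simp
  then have "cinner (h - y) y = 0" using LIMSEQ_unique[OF _ tendsto_const] by metis
  then have "cinner y y = 0" using hy by (simp add: cinner_diff_left)
  then have "y = 0" by (rule cinner_eq_zero_self)
  then have P0: "(\<lambda>n. norm (P n)) \<longlonglongrightarrow> 0" using Py tendsto_norm_zero by blast
  have bound: "cmod (cinner (K r h) h) \<le> norm h * norm (P n)" if r: "r \<ge> real n" for r n
  proof -
    have r0: "r \<ge> 0" using r by simp
    have "K r h \<in> range (K (real n))" using sg_range_mono[OF SG _ r] by auto
    then have "cinner (h - P n) (K r h) = 0" by (rule Porth)
    then have "cinner (K r h) (h - P n) = 0" by (metis cinner_commute complex_cnj_zero)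
    then have "cinner (K r h) h = cinner (K r h) (P n)" by (simp add: cinner_diff_right)
    also have "cmod \<dots> \<le> norm (K r h) * norm (P n)" by (rule cinner_CS)
    finally show ?thesis using sg_norm[OF SG r0] by simp
  qed
  show ?thesis
    unfolding tendsto_iff
  proof (intro allI impI)
    fix e :: real assume e: "0 < e"
    have "e / (norm h + 1) > 0" using e by (simp add: add_nonneg_pos)
    then have "eventually (\<lambda>n. norm (P n) < e / (norm h + 1)) sequentially"
      using P0 unfolding tendsto_iff by (auto simp: dist_real_def)
    then obtain n where n: "norm (P n) < e / (norm h + 1)" using eventually_sequentially by auto
    have "norm h * norm (P n) < e"
    proof -
      have "norm h * norm (P n) \<le> (norm h + 1) * norm (P n)" by (simp add: mult_right_mono)
      also have "\<dots> < (norm h + 1) * (e / (norm h + 1))"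
        using n by (intro mult_strict_left_mono) (auto simp: add_nonneg_pos)
      also have "\<dots> = e"
      proof -
        have "norm h + 1 \<noteq> 0" using norm_ge_zero[of h] by linarith
        then show ?thesis by simp
      qed
      finally show ?thesis .
    qed
    then show "eventually (\<lambda>r. dist (cinner (K r h) h) 0 < e) at_top"
      unfolding eventually_at_top_linorder
    proof (intro exI[of _ "real n"] allI impI)
      fix r assume "r \<ge> real n" "norm h * norm (P n) < e"
      then show "dist (cinner (K r h) h) 0 < e" using bound[of n r] by simp
    qed
  qed
qed



lemma amgm_min:
  fixes x A B :: real
  assumes A: "A \<ge> 0" and B: "B \<ge> 0" and H: "\<And>l. l > 0 \<Longrightarrow> x \<le> (l * A + B / l) / 2"
  shows "x \<le> sqrt (A * B)"
proof (cases "A > 0 \<and> B > 0")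
  case True
  define l where "l = sqrt B / sqrt A"
  have l: "l > 0" using True by (simp add: l_def)
  have "l * A = sqrt A * sqrt B"
    using True by (simp add: l_def field_simps; metis real_sqrt_pow2 less_imp_le power2_eq_square)
  moreover have "B / l = sqrt A * sqrt B"
    using True by (simp add: l_def field_simps; metis real_sqrt_pow2 less_imp_le power2_eq_square)
  ultimately show ?thesis using H[OF l] by (simp add: real_sqrt_mult)
next
  case False
  then have AB: "A * B = 0" using A B by auto
  show ?thesis
  proof (rule ccontr)
    assume "\<not> x \<le> sqrt (A * B)"
    then have x: "x > 0" using AB by simp
    show False
    proof (cases "A = 0")
      case True
      define l where "l = (B + 1) / x"
      have l: "l > 0" using x B by (simp add: l_def)
      have "B / l = B * x / (B + 1)" using x B by (simp add: l_def)
      also have "\<dots> < x" using x B by (simp add: field_simps)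
      finally show False using H[OF l] True x by simp
    next
      case False
      then have "B = 0" "A > 0" using AB A by auto
      define l where "l = x / A"
      have l: "l > 0" using x \<open>A > 0\<close> by (simp add: l_def)
      have "l * A = x" using \<open>A > 0\<close> by (simp add: l_def)
      then show False using H[OF l] \<open>B = 0\<close> x by simp
    qed
  qed
qed

lemma cs_integral:
  fixes f k :: "'b \<Rightarrow> real"
  assumes fm: "f \<in> borel_measurable M" and km: "k \<in> borel_measurable M"
    and fi: "integrable M (\<lambda>x. (f x)^2)" and ki: "integrable M (\<lambda>x. (k x)^2)"
  shows "integrable M (\<lambda>x. \<bar>f x\<bar> * \<bar>k x\<bar>)"
    and "(\<integral>x. \<bar>f x\<bar> * \<bar>k x\<bar> \<partial>M) \<le> sqrt ((\<integral>x. (f x)^2 \<partial>M) * (\<integral>x. (k x)^2 \<partial>M))"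
proof -
  have pw: "\<bar>f x\<bar> * \<bar>k x\<bar> \<le> l / 2 * (f x)^2 + 1 / (2 * l) * (k x)^2" if l: "l > 0" for l x
  proof -
    have "0 \<le> (l * \<bar>f x\<bar> - \<bar>k x\<bar>)^2" by simp
    then have "2 * l * (\<bar>f x\<bar> * \<bar>k x\<bar>) \<le> l^2 * (f x)^2 + (k x)^2"
      by (simp add: power2_eq_square algebra_simps)
    then have "2 * l * (\<bar>f x\<bar> * \<bar>k x\<bar>) \<le> 2 * l * (l / 2 * (f x)^2 + 1 / (2 * l) * (k x)^2)"
      using l by (simp add: algebra_simps power2_eq_square)
    then show ?thesis using l by simp
  qed
  have bi: "integrable M (\<lambda>x. 1 / 2 * (f x)^2 + 1 / 2 * (k x)^2)"
    using fi ki by simp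
  show int: "integrable M (\<lambda>x. \<bar>f x\<bar> * \<bar>k x\<bar>)"
  proof (rule Bochner_Integration.integrable_bound[OF bi])
    show "(\<lambda>x. \<bar>f x\<bar> * \<bar>k x\<bar>) \<in> borel_measurable M" using fm km by measurable
    show "AE x in M. norm (\<bar>f x\<bar> * \<bar>k x\<bar>) \<le> norm (1 / 2 * (f x)^2 + 1 / 2 * (k x)^2)"
      using pw[of 1] by (simp add: abs_mult)
  qed
  show "(\<integral>x. \<bar>f x\<bar> * \<bar>k x\<bar> \<partial>M) \<le> sqrt ((\<integral>x. (f x)^2 \<partial>M) * (\<integral>x. (k x)^2 \<partial>M))"
  proof (rule amgm_min)
    show "0 \<le> (\<integral>x. (f x)^2 \<partial>M)" "0 \<le> (\<integral>x. (k x)^2 \<partial>M)" by simp_all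
    fix l :: real assume l: "l > 0"
    have "(\<integral>x. \<bar>f x\<bar> * \<bar>k x\<bar> \<partial>M) \<le> (\<integral>x. l / 2 * (f x)^2 + 1 / (2 * l) * (k x)^2 \<partial>M)"
      using int fi ki pw[OF l] by (intro integral_mono) auto
    also have "\<dots> = l / 2 * (\<integral>x. (f x)^2 \<partial>M) + 1 / (2 * l) * (\<integral>x. (k x)^2 \<partial>M)"
      using fi ki by simp
    finally show "(\<integral>x. \<bar>f x\<bar> * \<bar>k x\<bar> \<partial>M) \<le> (l * (\<integral>x. (f x)^2 \<partial>M) + (\<integral>x. (k x)^2 \<partial>M) / l) / 2"
      by (simp add: field_simps)
  qed
qed



lemma ind_facts:
  fixes a b \<tau> :: real
  assumes "0 \<le> a" "b \<le> \<tau>"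
  shows "indicator {a..b} \<in> borel_measurable (lebesgue_on {0..\<tau>})"
    and "integrable (lebesgue_on {0..\<tau>}) (\<lambda>x. (indicator {a..b} x :: real)^2)"
    and "(\<integral>x. (indicator {a..b} x :: real)^2 \<partial>lebesgue_on {0..\<tau>}) \<le> max 0 (b - a)"
proof -
  have S: "{a..b} \<in> sets (lebesgue_on {0..\<tau>})" using assms by (simp add: sets_restrict_space_iff)
  show m: "indicator {a..b} \<in> borel_measurable (lebesgue_on {0..\<tau>})"
    by (rule borel_measurable_indicator[OF S])
  have sq: "(\<lambda>x. (indicator {a..b} x :: real)^2) = indicator {a..b}"
    by (auto simp: indicator_def fun_eq_iff)
  show "integrable (lebesgue_on {0..\<tau>}) (\<lambda>x. (indicator {a..b} x :: real)^2)"
    unfolding sq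
  proof (rule Bochner_Integration.integrable_bound[of _ "\<lambda>_. 1::real"])
    show "integrable (lebesgue_on {0..\<tau>}) (\<lambda>_. 1::real)" by simp
    show "AE x in lebesgue_on {0..\<tau>}. norm (indicator {a..b} x :: real) \<le> norm (1::real)"
      by (simp add: indicator_def)
  qed (rule m)
  have "(\<integral>x. (indicator {a..b} x :: real)^2 \<partial>lebesgue_on {0..\<tau>}) = measure (lebesgue_on {0..\<tau>}) ({a..b} \<inter> {0..\<tau>})"
    unfolding sq by (simp add: integral_indicator)
  also have "{a..b} \<inter> {0..\<tau>} = {a..b}" using assms by auto
  also have "measure (lebesgue_on {0..\<tau>}) {a..b} = measure lebesgue {a..b}"
    using assms by (simp add: measure_restrict_space)
  also have "\<dots> \<le> max 0 (b - a)" by simp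
  finally show "(\<integral>x. (indicator {a..b} x :: real)^2 \<partial>lebesgue_on {0..\<tau>}) \<le> max 0 (b - a)" .
qed

lemma key_bound:
  fixes g :: "real \<Rightarrow> complex" and k :: "real \<Rightarrow> real \<Rightarrow> complex"
  assumes \<tau>: "\<tau> > 0" and gL: "g \<in> L2_on \<tau>" and e: "e \<ge> 0" and Mb: "Mb \<ge> 0" and R: "R \<ge> 0"
    and kb: "\<And>s t. s \<in> {0..\<tau>} \<Longrightarrow> t \<in> {0..\<tau>} \<Longrightarrow> cmod (k s t) \<le> Mb"
    and kf: "\<And>s t. s \<in> {0..\<tau>} \<Longrightarrow> t \<in> {0..\<tau>} \<Longrightarrow> R \<le> \<bar>s - t\<bar> \<Longrightarrow> cmod (k s t) \<le> e"
    and big: "Mb * sqrt (2 * R * \<tau>) \<le> e * \<tau>"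
  shows "cmod (\<integral>t. (complex_of_real (1/\<tau>) * (\<integral>s. g s * k s t \<partial>lebesgue_on {0..\<tau>})) * cnj (g t) \<partial>lebesgue_on {0..\<tau>})
           \<le> 2 * e * L2_norm_sq \<tau> g"
proof -
  let ?M = "lebesgue_on {0..\<tau>}"
  define G where "G t = cmod (g t)" for t
  define N where "N = L2_norm_sq \<tau> g"
  have gm: "g \<in> borel_measurable ?M" and G2i: "integrable ?M (\<lambda>t. (G t)^2)"
    using gL by (auto simp: L2_on_def G_def)
  have Gm: "G \<in> borel_measurable ?M" unfolding G_def using gm by measurable
  have N: "N = (\<integral>t. (G t)^2 \<partial>?M)" by (simp add: N_def L2_norm_sq_def G_def)
  have N0: "N \<ge> 0" unfolding N by simp
  have G0: "G t \<ge> 0" for t by (simp add: G_def)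
  have one_i: "integrable ?M (\<lambda>t. ((\<lambda>_. 1::real) t)^2)" by simp
  have one_m: "(\<lambda>_. 1::real) \<in> borel_measurable ?M" by simp
  have int1: "(\<integral>t. ((\<lambda>_. 1::real) t)^2 \<partial>?M) = \<tau>"
    using \<tau> by (simp add: measure_restrict_space)
  note cs1 = cs_integral[OF Gm one_m G2i one_i]
  have Gi: "integrable ?M G" using cs1(1) G0 by simp
  have intG: "(\<integral>t. G t \<partial>?M) \<le> sqrt (N * \<tau>)"
  proof -
    have meas: "measure ?M {0..\<tau>} = \<tau>" using \<tau> by (simp add: measure_restrict_space)
    show ?thesis using cs1(2) G0 by (simp add: N meas)
  qed
  define C where "C = (1/\<tau>) * (e * sqrt (N * \<tau>) + Mb * sqrt (N * (2 * R)))"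
  have C0: "C \<ge> 0" using \<tau> e Mb N0 R unfolding C_def
    by (intro mult_nonneg_nonneg add_nonneg_nonneg) auto
  have inner: "cmod (complex_of_real (1/\<tau>) * (\<integral>s. g s * k s t \<partial>?M)) \<le> C" if t: "t \<in> {0..\<tau>}" for t
  proof -
    define a where "a = max (t - R) 0"
    define b where "b = min (t + R) \<tau>"
    have ab: "0 \<le> a" "b \<le> \<tau>" by (auto simp: a_def b_def)
    define ind where "ind = (indicator {a..b} :: real \<Rightarrow> real)"
    note IF = ind_facts[OF ab, folded ind_def]
    have indm: "ind \<in> borel_measurable ?M" using IF(1) by (simp add: ind_def)
    note cs2 = cs_integral[OF Gm indm G2i IF(2)]
    have i2: "(\<integral>x. (ind x)^2 \<partial>?M) \<le> 2 * R"
      using IF(3) R by (simp add: a_def b_def)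
    have intGi: "(\<integral>s. \<bar>G s\<bar> * \<bar>ind s\<bar> \<partial>?M) \<le> sqrt (N * (2 * R))"
    proof -
      have "(\<integral>s. \<bar>G s\<bar> * \<bar>ind s\<bar> \<partial>?M) \<le> sqrt (N * (\<integral>x. (ind x)^2 \<partial>?M))"
        using cs2(2) by (simp add: N)
      also have "\<dots> \<le> sqrt (N * (2 * R))"
        using i2 N0 by (simp add: mult_left_mono)
      finally show ?thesis .
    qed
    have pw: "cmod (g s * k s t) \<le> e * G s + Mb * (\<bar>G s\<bar> * \<bar>ind s\<bar>)" if s: "s \<in> space ?M" for s
    proof -
      have s': "s \<in> {0..\<tau>}" using s by simp
      have eq: "cmod (g s * k s t) = G s * cmod (k s t)" by (simp add: G_def norm_mult)
      show ?thesis
      proof (cases "R \<le> \<bar>s - t\<bar>")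
        case True
        then have "G s * cmod (k s t) \<le> G s * e" using kf[OF s' t] G0 by (simp add: mult_left_mono)
        moreover have "0 \<le> Mb * (\<bar>G s\<bar> * \<bar>ind s\<bar>)" using Mb by simp
        ultimately show ?thesis using eq by (simp add: mult.commute)
      next
        case False
        then have "s \<in> {a..b}" using s' by (auto simp: a_def b_def)
        then have "ind s = 1" by (simp add: ind_def)
        moreover have "G s * cmod (k s t) \<le> G s * Mb" using kb[OF s' t] G0 by (simp add: mult_left_mono)
        moreover have "0 \<le> e * G s" using e G0 by simp
        ultimately show ?thesis using eq G0 by (simp add: mult.commute)
      qed
    qed
    have bi: "integrable ?M (\<lambda>s. e * G s + Mb * (\<bar>G s\<bar> * \<bar>ind s\<bar>))"
      using Gi cs2(1) by simp
    have "cmod (\<integral>s. g s * k s t \<partial>?M) \<le> (\<integral>s. cmod (g s * k s t) \<partial>?M)"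
      by (rule integral_norm_bound)
    also have "\<dots> \<le> (\<integral>s. e * G s + Mb * (\<bar>G s\<bar> * \<bar>ind s\<bar>) \<partial>?M)"
    proof (rule integral_mono'[OF bi pw])
      fix s show "0 \<le> e * G s + Mb * (\<bar>G s\<bar> * \<bar>ind s\<bar>)" using e Mb G0 by simp
    qed
    also have "\<dots> = e * (\<integral>s. G s \<partial>?M) + Mb * (\<integral>s. \<bar>G s\<bar> * \<bar>ind s\<bar> \<partial>?M)"
      using Gi cs2(1) by simp
    also have "\<dots> \<le> e * sqrt (N * \<tau>) + Mb * sqrt (N * (2 * R))"
      using intG intGi e Mb by (intro add_mono mult_left_mono) auto
    finally have "cmod (\<integral>s. g s * k s t \<partial>?M) \<le> e * sqrt (N * \<tau>) + Mb * sqrt (N * (2 * R))" .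
    moreover have "cmod (complex_of_real (1/\<tau>) * (\<integral>s. g s * k s t \<partial>?M)) = (1/\<tau>) * cmod (\<integral>s. g s * k s t \<partial>?M)"
      using \<tau> by (simp only: norm_mult norm_of_real) simp
    ultimately show ?thesis using \<tau> unfolding C_def by (simp add: divide_right_mono)
  qed
  have "cmod (\<integral>t. (complex_of_real (1/\<tau>) * (\<integral>s. g s * k s t \<partial>?M)) * cnj (g t) \<partial>?M)
        \<le> (\<integral>t. cmod ((complex_of_real (1/\<tau>) * (\<integral>s. g s * k s t \<partial>?M)) * cnj (g t)) \<partial>?M)"
    by (rule integral_norm_bound)
  also have "\<dots> \<le> (\<integral>t. C * G t \<partial>?M)"
  proof (rule integral_mono')
    show "integrable ?M (\<lambda>t. C * G t)" using Gi by simp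
    fix t assume "t \<in> space ?M"
    then have t: "t \<in> {0..\<tau>}" by simp
    show "cmod ((complex_of_real (1/\<tau>) * (\<integral>s. g s * k s t \<partial>?M)) * cnj (g t)) \<le> C * G t"
    proof -
      have "cmod ((complex_of_real (1/\<tau>) * (\<integral>s. g s * k s t \<partial>?M)) * cnj (g t))
          = cmod (complex_of_real (1/\<tau>) * (\<integral>s. g s * k s t \<partial>?M)) * G t"
        by (simp only: norm_mult complex_mod_cnj G_def)
      also have "\<dots> \<le> C * G t" using inner[OF t] G0 by (rule mult_right_mono)
      finally show ?thesis .
    qed
    show "0 \<le> C * G t" using C0 G0 by simp
  qed
  also have "\<dots> = C * (\<integral>t. G t \<partial>?M)" by simp
  also have "\<dots> \<le> C * sqrt (N * \<tau>)" using intG C0 by (simp add: mult_left_mono)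
  also have "\<dots> = (1/\<tau>) * (e * (sqrt (N * \<tau>) * sqrt (N * \<tau>)) + Mb * (sqrt (N * (2 * R)) * sqrt (N * \<tau>)))"
    by (simp add: C_def algebra_simps)
  also have "sqrt (N * \<tau>) * sqrt (N * \<tau>) = N * \<tau>" using N0 \<tau> by simp
  also have "sqrt (N * (2 * R)) * sqrt (N * \<tau>) = N * sqrt (2 * R * \<tau>)"
  proof -
    have "sqrt (N * (2 * R)) * sqrt (N * \<tau>) = sqrt (N^2 * (2 * R * \<tau>))"
      by (simp add: real_sqrt_mult[symmetric] power2_eq_square algebra_simps)
    also have "\<dots> = N * sqrt (2 * R * \<tau>)" using N0 by (simp add: real_sqrt_mult)
    finally show ?thesis .
  qed
  also have "(1/\<tau>) * (e * (N * \<tau>) + Mb * (N * sqrt (2 * R * \<tau>))) \<le> (1/\<tau>) * (e * (N * \<tau>) + N * (e * \<tau>))"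
    using big N0 \<tau> by (intro mult_left_mono add_left_mono) (auto simp: mult.left_commute[of Mb] intro: mult_left_mono)
  also have "\<dots> = 2 * e * N" using \<tau> by (simp add: field_simps)
  finally show ?thesis by (simp add: N_def)
qed



lemma kernel_facts:
  fixes K :: "real \<Rightarrow> 'a::chilbert_space \<Rightarrow> 'a"
  assumes SG: "strongly_cont_isometry_semigroup K" and s: "s \<ge> 0" and t: "t \<ge> 0"
  shows "cmod (cinner (K s h) (K t h)) \<le> (norm h)^2"
    and "cmod (cinner (K s h) (K t h)) = cmod (cinner (K \<bar>s - t\<bar> h) h)"
proof -
  show "cmod (cinner (K s h) (K t h)) \<le> (norm h)^2"
    using cinner_CS[of "K s h" "K t h"] sg_norm[OF SG s] sg_norm[OF SG t] by (simp add: power2_eq_square)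
  show "cmod (cinner (K s h) (K t h)) = cmod (cinner (K \<bar>s - t\<bar> h) h)"
  proof (cases "t \<le> s")
    case True
    have "K s h = K t (K (s - t) h)" using sg_comp[OF SG t, of "s - t" h] True by simp
    then have "cinner (K s h) (K t h) = cinner (K (s - t) h) h" by (simp add: sg_cinner[OF SG t])
    then show ?thesis using True by simp
  next
    case False
    have "K t h = K s (K (t - s) h)" using sg_comp[OF SG s, of "t - s" h] False by simp
    then have "cinner (K s h) (K t h) = cinner h (K (t - s) h)" by (simp add: sg_cinner[OF SG s])
    also have "\<dots> = cnj (cinner (K (t - s) h) h)" by (rule cinner_commute)
    finally show ?thesis using False by simp
  qed
qed

theorem proposition2:
  fixes K :: "real \<Rightarrow> 'a::chilbert_space \<Rightarrow> 'a" and h :: 'a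
  assumes "strongly_cont_isometry_semigroup K"
    and "h \<in> nonunitary_part K"
  shows "((\<lambda>\<tau>. lambda1 K h \<tau>) \<longlongrightarrow> 0) at_top"
proof -
  note SG = assms(1)
  note phi = phi_tendsto_zero[OF assms]
  define Mb where "Mb = (norm h)^2"
  have Mb: "Mb \<ge> 0" by (simp add: Mb_def)
  show ?thesis
    unfolding tendsto_iff
  proof (intro allI impI)
    fix \<epsilon> :: real assume \<epsilon>: "0 < \<epsilon>"
    define e where "e = \<epsilon> / 4"
    have e: "e > 0" using \<epsilon> by (simp add: e_def)
    have "eventually (\<lambda>r. dist (cinner (K r h) h) 0 < e) at_top"
      using phi e unfolding tendsto_iff by blast
    then obtain R0 where R0: "\<And>r. r \<ge> R0 \<Longrightarrow> cmod (cinner (K r h) h) < e"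
      unfolding eventually_at_top_linorder by auto
    define R where "R = max R0 0"
    have R: "R \<ge> 0" by (simp add: R_def)
    define T where "T = max 1 (2 * R * Mb^2 / e^2)"
    have bound: "\<bar>lambda1 K h \<tau>\<bar> \<le> 2 * e" if \<tau>T: "\<tau> \<ge> T" for \<tau>
    proof -
      have \<tau>: "\<tau> > 0" using \<tau>T by (simp add: T_def)
      have big: "Mb * sqrt (2 * R * \<tau>) \<le> e * \<tau>"
      proof -
        have "2 * R * Mb^2 / e^2 \<le> \<tau>" using \<tau>T by (simp add: T_def)
        then have "2 * R * Mb^2 \<le> e^2 * \<tau>" using e by (simp add: field_simps)
        then have "2 * R * Mb^2 * \<tau> \<le> e^2 * \<tau> * \<tau>" using \<tau> by (simp add: mult_right_mono)
        then have "sqrt (Mb^2 * (2 * R * \<tau>)) \<le> sqrt ((e * \<tau>)^2)"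
          by (simp add: power2_eq_square algebra_simps)
        then show ?thesis using Mb e \<tau> by (simp add: real_sqrt_mult)
      qed
      define S where "S = {Re (A_form K h \<tau> g) / L2_norm_sq \<tau> g | g. g \<in> L2_on \<tau> \<and> L2_norm_sq \<tau> g \<noteq> 0}"
      have Sb: "\<bar>x\<bar> \<le> 2 * e" if "x \<in> S" for x
      proof -
        from that obtain g where x: "x = Re (A_form K h \<tau> g) / L2_norm_sq \<tau> g"
          and g: "g \<in> L2_on \<tau>" and N: "L2_norm_sq \<tau> g \<noteq> 0" unfolding S_def by blast
        have N0: "L2_norm_sq \<tau> g > 0" using N by (simp add: L2_norm_sq_def order_less_le)
        have "cmod (A_form K h \<tau> g) \<le> 2 * e * L2_norm_sq \<tau> g"
          unfolding A_form_def A_op_def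
        proof (rule key_bound[OF \<tau> g less_imp_le[OF e] Mb R _ _ big])
          fix s t assume s: "s \<in> {0..\<tau>}" and t: "t \<in> {0..\<tau>}"
          show "cmod (cinner (K s h) (K t h)) \<le> Mb"
            using kernel_facts(1)[OF SG, of s t h] s t by (simp add: Mb_def)
          assume "R \<le> \<bar>s - t\<bar>"
          then have "R0 \<le> \<bar>s - t\<bar>" by (simp add: R_def)
          then show "cmod (cinner (K s h) (K t h)) \<le> e"
            using kernel_facts(2)[OF SG, of s t h] s t R0 by (simp add: less_imp_le)
        qed
        then have "\<bar>Re (A_form K h \<tau> g)\<bar> \<le> 2 * e * L2_norm_sq \<tau> g"
          using abs_Re_le_cmod[of "A_form K h \<tau> g"] by linarith
        moreover have "\<bar>x\<bar> = \<bar>Re (A_form K h \<tau> g)\<bar> / L2_norm_sq \<tau> g"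
          using N0 by (simp add: x abs_divide)
        ultimately show ?thesis using N0 by (simp add: pos_divide_le_eq)
      qed
      have one: "(\<lambda>_. 1::complex) \<in> L2_on \<tau>" by (simp add: L2_on_def)
      have one_n: "L2_norm_sq \<tau> (\<lambda>_. 1::complex) = \<tau>"
        using \<tau> by (simp add: L2_norm_sq_def measure_restrict_space)
      obtain x0 where x0: "x0 \<in> S" using one one_n \<tau> unfolding S_def by fastforce
      have Sne: "S \<noteq> {}" using x0 by blast
      have bdd: "bdd_above S" using Sb by (intro bdd_aboveI[of _ "2 * e"]) (auto simp: abs_le_iff)
      have up: "Sup S \<le> 2 * e" using Sb by (intro cSup_least[OF Sne]) (auto simp: abs_le_iff)
      have lo: "- (2 * e) \<le> Sup S"
        using Sb[OF x0] cSup_upper[OF x0 bdd] by (auto simp: abs_le_iff)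
      have "lambda1 K h \<tau> = Sup S" by (simp add: lambda1_def S_def)
      then show ?thesis using up lo by simp
    qed
    show "eventually (\<lambda>\<tau>. dist (lambda1 K h \<tau>) 0 < \<epsilon>) at_top"
      unfolding eventually_at_top_linorder
    proof (intro exI[of _ T] allI impI)
      fix \<tau> assume "\<tau> \<ge> T"
      then show "dist (lambda1 K h \<tau>) 0 < \<epsilon>" using bound[of \<tau>] e \<epsilon> by (simp add: e_def)
    qed
  qed
qed


end
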